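(* Let $\alpha,\beta,\gamma>0$ with $\gamma^2-\alpha\beta>0$ and $n\ge2$. Then $Z_n^{\mathcal{GS}}=Z_n$, where $Z_n$ is the partition function of the six-vertex model on $\mathbb{T}_n$ with weights $a_1=1$, $a_2=\gamma^2-\alpha\beta$, $b_1=\beta$, $b_2=\alpha$, $c_1=c_2=\gamma$. In particular $Z_n^{\mathcal{GS}}>0$.
   Context: Six-vertex model on $\mathbb{T}_n=(\mathbb{Z}/n\mathbb{Z})^2$: orientations of edges with two in and two out at each vertex; vertex types (weights): type 1 ($a_1$): horizontal right, vertical up; type 2 ($a_2$): horizontal left, vertical down; type 3 ($b_1$): horizontal right, vertical down; type 4 ($b_2$): horizontal left, vertical up; type 5 ($c_1$): horizontal in, vertical out; type 6 ($c_2$): horizontal out, vertical in. $Z_n=\sum_\sigma\prod_v(\text{weight of type at }v)$. Snakes: $e^1=(1,0)$, $e^2=(0,1)$, $e^3=\frac12(e^1+e^2)$; mid-edges $\mathbb{M}_n$ = black $\{v+\frac12e^1\}$ ⊔ white $\{v+\frac12e^2\}$, $v\in\mathbb{T}_n$, mod $n$. A generalised snake configuration is a permutation $\bar\rho$ of $\mathbb{M}_n$ with $\bar\rho(x)\in\{x,x+e^3,x+e^1\}$ ($x$ black), $\bar\rho(x)\in\{x,x+e^3,x+e^2\}$ ($x$ white); $\mathcal{GS}_n$ their set. $S(\bar\rho)$ = number of vertices $v$ with $\bar\rho(v-\frac12e^1)=v+\frac12e^1$ and $\bar\rho(v-\frac12e^2)=v+\frac12e^2$; $A,B,C$ = numbers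 of $x$ with $\bar\rho(x)=x+e^1$, $x+e^2$, $x+e^3$ respectively. $Z_n^{\mathcal{GS}}=\sum_{\bar\rho\in\mathcal{GS}_n}(-1)^{S(\bar\rho)}\alpha^{A(\bar\rho)}\beta^{B(\bar\rho)}\gamma^{C(\bar\rho)}$. *)

theory Defs
  imports Complex_Main "HOL-Library.FuncSet" "HOL-Combinatorics.Permutations"
begin

text \<open>Vertices are pairs (i,j) with 0 <= i,j < n; arithmetic is mod n.
  The horizontal edge at v=(i,j) joins v to v+e1, the vertical edge at v joins v to v+e2.\<close>

definition grid :: "nat \<Rightarrow> (nat \<times> nat) set" where
  "grid n = {0..<n} \<times> {0..<n}"

definition succ_mod :: "nat \<Rightarrow> nat \<Rightarrow> nat" where
  "succ_mod n i = (i + 1) mod n"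

definition pred_mod :: "nat \<Rightarrow> nat \<Rightarrow> nat" where
  "pred_mod n i = (i + n - 1) mod n"

text \<open>An orientation is a pair (h, w) of boolean functions on the grid:
  h v = True iff the horizontal edge at v points right (towards v+e1),
  w v = True iff the vertical edge at v points up (towards v+e2).
  At vertex v=(i,j): left edge = h(i-1,j), right edge = h(i,j),
  lower edge = w(i,j-1), upper edge = w(i,j).\<close>

definition in_degree :: "nat \<Rightarrow> (nat \<times> nat \<Rightarrow> bool) \<Rightarrow> (nat \<times> nat \<Rightarrow> bool) \<Rightarrow> nat \<times> nat \<Rightarrow> nat" where
  "in_degree n h w v = (case v of (i, j) \<Rightarrow>
      (if h (pred_mod n i, j) then 1 else 0) + (if \<not> h (i, j) then 1 else 0)
    + (if w (i, pred_mod n j) then 1 else 0) + (if \<not> w (i, j) then 1 else 0))"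

definition six_vertex_configs :: "nat \<Rightarrow> ((nat \<times> nat \<Rightarrow> bool) \<times> (nat \<times> nat \<Rightarrow> bool)) set" where
  "six_vertex_configs n =
     {(h, w). h \<in> grid n \<rightarrow>\<^sub>E (UNIV :: bool set) \<and> w \<in> grid n \<rightarrow>\<^sub>E (UNIV :: bool set)
        \<and> (\<forall>v \<in> grid n. in_degree n h w v = 2)}"

text \<open>Weight of a vertex given l (left edge points right), r (right edge points right),
  d (lower edge points up), u (upper edge points up).\<close>

definition vertex_weight :: "real \<Rightarrow> real \<Rightarrow> real \<Rightarrow> real \<Rightarrow> real \<Rightarrow> real \<Rightarrow> bool \<Rightarrow> bool \<Rightarrow> bool \<Rightarrow> bool \<Rightarrow> real" where
  "vertex_weight a1 a2 b1 b2 c1 c2 l r d u =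
     (if l \<and> r \<and> d \<and> u then a1                 \<comment> \<open>type 1: right, up\<close>
      else if \<not> l \<and> \<not> r \<and> \<not> d \<and> \<not> u then a2    \<comment> \<open>type 2: left, down\<close>
      else if l \<and> r \<and> \<not> d \<and> \<not> u then b1         \<comment> \<open>type 3: right, down\<close>
      else if \<not> l \<and> \<not> r \<and> d \<and> u then b2         \<comment> \<open>type 4: left, up\<close>
      else if l \<and> \<not> r \<and> \<not> d \<and> u then c1         \<comment> \<open>type 5: horizontal in, vertical out\<close>
      else if \<not> l \<and> r \<and> d \<and> \<not> u then c2         \<comment> \<open>type 6: horizontal out, vertical in\<close>
      else 0)"

definition Z6 :: "nat \<Rightarrow> real \<Rightarrow> real \<Rightarrow> real \<Rightarrow> real \<Rightarrow> real \<Rightarrow> real \<Rightarrow> real" where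
  "Z6 n a1 a2 b1 b2 c1 c2 =
     (\<Sum>(h, w) \<in> six_vertex_configs n. \<Prod>v \<in> grid n. case v of (i, j) \<Rightarrow>
        vertex_weight a1 a2 b1 b2 c1 c2
          (h (pred_mod n i, j)) (h (i, j)) (w (i, pred_mod n j)) (w (i, j)))"

text \<open>Mid-edges: (False, i, j) is the black mid-edge v + e1/2, (True, i, j) the white
  mid-edge v + e2/2, where v = (i,j).\<close>

type_synonym midedge = "bool \<times> nat \<times> nat"

definition midedges :: "nat \<Rightarrow> midedge set" where
  "midedges n = UNIV \<times> grid n"

definition plus_e1 :: "nat \<Rightarrow> midedge \<Rightarrow> midedge" where
  "plus_e1 n x = (case x of (c, i, j) \<Rightarrow> (c, succ_mod n i, j))"

definition plus_e2 :: "nat \<Rightarrow> midedge \<Rightarrow> midedge" where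
  "plus_e2 n x = (case x of (c, i, j) \<Rightarrow> (c, i, succ_mod n j))"

text \<open>black v+e1/2 + e3 = white (v+e1)+e2/2; white v+e2/2 + e3 = black (v+e2)+e1/2.\<close>

definition plus_e3 :: "nat \<Rightarrow> midedge \<Rightarrow> midedge" where
  "plus_e3 n x = (case x of (c, i, j) \<Rightarrow>
      (if c then (False, i, succ_mod n j) else (True, succ_mod n i, j)))"

definition GS :: "nat \<Rightarrow> (midedge \<Rightarrow> midedge) set" where
  "GS n = {\<rho>. \<rho> permutes midedges n \<and>
      (\<forall>x \<in> midedges n.
         (\<not> fst x \<longrightarrow> \<rho> x \<in> {x, plus_e3 n x, plus_e1 n x}) \<and>
         (fst x \<longrightarrow> \<rho> x \<in> {x, plus_e3 n x, plus_e2 n x}))}"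

definition S_count :: "nat \<Rightarrow> (midedge \<Rightarrow> midedge) \<Rightarrow> nat" where
  "S_count n \<rho> = card {v \<in> grid n. case v of (i, j) \<Rightarrow>
       \<rho> (False, pred_mod n i, j) = (False, i, j) \<and> \<rho> (True, i, pred_mod n j) = (True, i, j)}"

definition A_count :: "nat \<Rightarrow> (midedge \<Rightarrow> midedge) \<Rightarrow> nat" where
  "A_count n \<rho> = card {x \<in> midedges n. \<rho> x = plus_e1 n x}"

definition B_count :: "nat \<Rightarrow> (midedge \<Rightarrow> midedge) \<Rightarrow> nat" where
  "B_count n \<rho> = card {x \<in> midedges n. \<rho> x = plus_e2 n x}"

definition C_count :: "nat \<Rightarrow> (midedge \<Rightarrow> midedge) \<Rightarrow> nat" where
  "C_count n \<rho> = card {x \<in> midedges n. \<rho> x = plus_e3 n x}"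

definition Z_GS :: "nat \<Rightarrow> real \<Rightarrow> real \<Rightarrow> real \<Rightarrow> real" where
  "Z_GS n \<alpha> \<beta> \<gamma> = (\<Sum>\<rho> \<in> GS n.
      (-1) ^ S_count n \<rho> * \<alpha> ^ A_count n \<rho> * \<beta> ^ B_count n \<rho> * \<gamma> ^ C_count n \<rho>)"

end

theory Submission
  imports Defs
begin

lemma sm_lt: "n \<ge> 2 \<Longrightarrow> succ_mod n i < n" by (simp add: succ_mod_def)
lemma pm_lt: "n \<ge> 2 \<Longrightarrow> pred_mod n i < n" by (simp add: pred_mod_def)
lemma pm_sm: "n \<ge> 2 \<Longrightarrow> i < n \<Longrightarrow> pred_mod n (succ_mod n i) = i"
  unfolding succ_mod_def pred_mod_def
  by (cases "i + 1 = n") (auto simp: mod_if)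
lemma sm_pm: "n \<ge> 2 \<Longrightarrow> i < n \<Longrightarrow> succ_mod n (pred_mod n i) = i"
  unfolding succ_mod_def pred_mod_def
  by (cases "i = 0") (auto simp: mod_if)
lemma sm_neq: "n \<ge> 2 \<Longrightarrow> i < n \<Longrightarrow> succ_mod n i \<noteq> i"
  unfolding succ_mod_def by (auto simp: mod_if)
lemma pm_neq: "n \<ge> 2 \<Longrightarrow> i < n \<Longrightarrow> pred_mod n i \<noteq> i"
  using sm_pm sm_neq pm_lt by metis
lemma sm_inj: "n \<ge> 2 \<Longrightarrow> i < n \<Longrightarrow> j < n \<Longrightarrow> succ_mod n i = succ_mod n j \<Longrightarrow> i = j"
  by (metis pm_sm)
lemma pm_inj: "n \<ge> 2 \<Longrightarrow> i < n \<Longrightarrow> j < n \<Longrightarrow> pred_mod n i = pred_mod n j \<Longrightarrow> i = j"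
  by (metis sm_pm)

definition allowed :: "bool \<Rightarrow> bool \<Rightarrow> bool \<Rightarrow> bool \<Rightarrow> (nat \<times> nat) set" where
  "allowed l r d u = set (filter (\<lambda>(a,b). (a \<noteq> 0 \<longleftrightarrow> \<not> l) \<and> (b \<noteq> 0 \<longleftrightarrow> \<not> d)
      \<and> ((a = 1 \<or> b = 1) \<longleftrightarrow> \<not> r) \<and> ((a = 2 \<or> b = 2) \<longleftrightarrow> \<not> u) \<and> (a = b \<longrightarrow> a = 0))
     [(0,0),(0,1),(0,2),(1,0),(1,1),(1,2),(2,0),(2,1),(2,2)])"

definition lw :: "real \<Rightarrow> real \<Rightarrow> real \<Rightarrow> nat \<times> nat \<Rightarrow> real" where
  "lw \<alpha> \<beta> \<gamma> s = (if fst s = 1 \<and> snd s = 2 then -1 else 1) * (if fst s = 1 then \<alpha> else 1)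
     * (if snd s = 2 then \<beta> else 1) * (if fst s = 2 then \<gamma> else 1) * (if snd s = 1 then \<gamma> else 1)"

lemma allowed_fin: "finite (allowed l r d u)"
  unfolding allowed_def by simp

lemma local_sum: "(\<Sum>s\<in>allowed l r d u. lw \<alpha> \<beta> \<gamma> s) =
   vertex_weight 1 (\<gamma>^2 - \<alpha> * \<beta>) \<beta> \<alpha> \<gamma> \<gamma> l r d u"
  by (cases l; cases r; cases d; cases u)
     (simp_all add: allowed_def vertex_weight_def lw_def power2_eq_square)


lemma mid_iff: "(c, i, j) \<in> midedges n \<longleftrightarrow> i < n \<and> j < n"
  by (simp add: midedges_def grid_def)

lemma GS_perm: "\<rho> \<in> GS n \<Longrightarrow> \<rho> permutes midedges n" by (simp add: GS_def)

lemma GS_L: assumes "\<rho> \<in> GS n" "n \<ge> 2" "i < n" "j < n"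
  shows "\<rho> (False, pred_mod n i, j) \<in> {(False, pred_mod n i, j), (False,i,j), (True,i,j)}"
proof -
  have "(False, pred_mod n i, j) \<in> midedges n" using assms by (simp add: mid_iff pm_lt)
  then show ?thesis using assms unfolding GS_def
    by (force simp: plus_e3_def plus_e1_def sm_pm)
qed

lemma GS_D: assumes "\<rho> \<in> GS n" "n \<ge> 2" "i < n" "j < n"
  shows "\<rho> (True, i, pred_mod n j) \<in> {(True, i, pred_mod n j), (False,i,j), (True,i,j)}"
proof -
  have "(True, i, pred_mod n j) \<in> midedges n" using assms by (simp add: mid_iff pm_lt)
  then show ?thesis using assms unfolding GS_def
    by (force simp: plus_e3_def plus_e2_def sm_pm)
qed

lemma GS_pre: assumes "\<rho> \<in> GS n" "n \<ge> 2" "i < n" "j < n" "z \<in> midedges n"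
   "\<rho> z \<in> {(False,i,j),(True,i,j)}" "\<rho> z \<noteq> z"
  shows "z = (False, pred_mod n i, j) \<or> z = (True, i, pred_mod n j)"
proof -
  obtain c i' j' where z: "z = (c,i',j')" "i' < n" "j' < n" using assms(5)
    by (cases z) (auto simp: mid_iff)
  show ?thesis
  proof (cases c)
    case True
    then have "\<rho> z \<in> {z, (False,i',succ_mod n j'), (True,i',succ_mod n j')}"
      using assms(1,5) z unfolding GS_def by (auto simp: plus_e3_def plus_e2_def)
    then show ?thesis using assms z True pm_sm by auto
  next
    case False
    then have "\<rho> z \<in> {z, (True,succ_mod n i',j'), (False,succ_mod n i',j')}"
      using assms(1,5) z unfolding GS_def by (auto simp: plus_e3_def plus_e1_def)
    then show ?thesis using assms z False pm_sm by auto
  qed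
qed


definition cd :: "nat \<times> nat \<Rightarrow> midedge \<Rightarrow> nat" where
  "cd u y = (if y = (False,u) then 1 else if y = (True,u) then 2 else 0)"

lemma local_ok: assumes "inj \<rho>" "surj \<rho>" "\<rho> L \<in> {L,(False,u),(True,u)}" "\<rho> D \<in> {D,(False,u),(True,u)}"
   "L \<notin> {(False,u),(True,u),D}" "D \<notin> {(False,u),(True,u)}"
   "\<And>z. \<rho> z \<in> {(False,u),(True,u)} \<Longrightarrow> \<rho> z \<noteq> z \<Longrightarrow> z = L \<or> z = D"
  shows "(cd u (\<rho> L), cd u (\<rho> D)) \<in> allowed (\<rho> L = L) (\<rho> (False,u) = (False,u)) (\<rho> D = D) (\<rho> (True,u) = (True,u))"
proof -
  have i: "\<rho> x = \<rho> y \<longleftrightarrow> x = y" for x y using assms(1) by (simp add: inj_eq)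
  have pre: "\<rho> y \<noteq> y \<Longrightarrow> y \<in> {(False,u),(True,u)} \<Longrightarrow> \<rho> L = y \<or> \<rho> D = y" for y
  proof -
    assume a: "\<rho> y \<noteq> y" "y \<in> {(False,u),(True,u)}"
    obtain z where z: "\<rho> z = y" using assms(2) by (metis surjD)
    have "z \<noteq> y" using z a by auto
    then have "z = L \<or> z = D" using assms(7)[of z] z a by auto
    then show ?thesis using z by auto
  qed
  have pF: "\<rho> (False,u) \<noteq> (False,u) \<Longrightarrow> \<rho> L = (False,u) \<or> \<rho> D = (False,u)"
    using pre by simp
  have pT: "\<rho> (True,u) \<noteq> (True,u) \<Longrightarrow> \<rho> L = (True,u) \<or> \<rho> D = (True,u)"
    using pre by simp
  have d: "\<rho> L \<noteq> \<rho> D" "\<rho> L \<noteq> \<rho> (False,u)" "\<rho> L \<noteq> \<rho> (True,u)"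
     "\<rho> D \<noteq> \<rho> (False,u)" "\<rho> D \<noteq> \<rho> (True,u)" using i assms(5,6) by auto
  show ?thesis using assms(3-6) pF pT d unfolding allowed_def cd_def by (auto; blast)
qed


definition allw :: "nat \<Rightarrow> (nat \<times> nat \<Rightarrow> bool) \<Rightarrow> (nat \<times> nat \<Rightarrow> bool) \<Rightarrow> nat \<times> nat \<Rightarrow> (nat \<times> nat) set" where
  "allw n h w u = allowed (h (pred_mod n (fst u), snd u)) (h u) (w (fst u, pred_mod n (snd u))) (w u)"

definition Lm :: "nat \<Rightarrow> nat \<times> nat \<Rightarrow> midedge" where "Lm n u = (False, pred_mod n (fst u), snd u)"
definition Dm :: "nat \<Rightarrow> nat \<times> nat \<Rightarrow> midedge" where "Dm n u = (True, fst u, pred_mod n (snd u))"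

definition Phi where
  "Phi n \<rho> = ((restrict (\<lambda>v. \<rho> (False,v) = (False,v)) (grid n),
      restrict (\<lambda>v. \<rho> (True,v) = (True,v)) (grid n)),
      restrict (\<lambda>u. (cd u (\<rho> (Lm n u)), cd u (\<rho> (Dm n u)))) (grid n))"

definition Ors :: "nat \<Rightarrow> ((nat \<times> nat \<Rightarrow> bool) \<times> (nat \<times> nat \<Rightarrow> bool)) set" where
  "Ors n = (grid n \<rightarrow>\<^sub>E (UNIV::bool set)) \<times> (grid n \<rightarrow>\<^sub>E (UNIV::bool set))"

definition TT where "TT n = Sigma (Ors n) (\<lambda>p. PiE (grid n) (allw n (fst p) (snd p)))"

lemma Phi_local: assumes "\<rho> \<in> GS n" "n \<ge> 2" "i < n" "j < n"
  shows "(cd (i,j) (\<rho> (Lm n (i,j))), cd (i,j) (\<rho> (Dm n (i,j)))) \<in>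
     allowed (\<rho> (Lm n (i,j)) = Lm n (i,j)) (\<rho> (False,i,j) = (False,i,j)) (\<rho> (Dm n (i,j)) = Dm n (i,j)) (\<rho> (True,i,j) = (True,i,j))"
proof (rule local_ok)
  have p: "\<rho> permutes midedges n" using assms(1) by (rule GS_perm)
  show "inj \<rho>" using p by (rule permutes_inj)
  show "surj \<rho>" using p by (rule permutes_surj)
  show "\<rho> (Lm n (i, j)) \<in> {Lm n (i, j), (False, i, j), (True, i, j)}"
    using GS_L[OF assms] by (simp add: Lm_def)
  show "\<rho> (Dm n (i, j)) \<in> {Dm n (i, j), (False, i, j), (True, i, j)}"
    using GS_D[OF assms] by (simp add: Dm_def)
  show "Lm n (i, j) \<notin> {(False, i, j), (True, i, j), Dm n (i, j)}"
    using pm_neq[OF assms(2,3)] by (simp add: Lm_def Dm_def)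
  show "Dm n (i, j) \<notin> {(False, i, j), (True, i, j)}"
    using pm_neq[OF assms(2,4)] by (simp add: Lm_def Dm_def)
  fix z assume z: "\<rho> z \<in> {(False, i, j), (True, i, j)}" "\<rho> z \<noteq> z"
  then have "z \<in> midedges n" using p by (meson permutes_not_in)
  then show "z = Lm n (i, j) \<or> z = Dm n (i, j)"
    using GS_pre[OF assms _ z] z by (simp add: Lm_def Dm_def)
qed

lemma Phi_in: assumes "\<rho> \<in> GS n" "n \<ge> 2" shows "Phi n \<rho> \<in> TT n"
proof -
  have "(\<lambda>u. (cd u (\<rho> (Lm n u)), cd u (\<rho> (Dm n u)))) u \<in>
     allw n (restrict (\<lambda>v. \<rho> (False,v) = (False,v)) (grid n)) (restrict (\<lambda>v. \<rho> (True,v) = (True,v)) (grid n)) u"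
    if u: "u \<in> grid n" for u
  proof -
    obtain i j where ij: "u = (i,j)" "i < n" "j < n" using u by (auto simp: grid_def)
    show ?thesis using Phi_local[OF assms ij(2,3)] ij assms(2)
      by (simp add: allw_def grid_def pm_lt Lm_def Dm_def)
  qed
  then show ?thesis unfolding Phi_def TT_def Ors_def by auto
qed


definition hv :: "nat \<Rightarrow> midedge \<Rightarrow> nat \<times> nat" where
  "hv n x = (if fst x then (fst (snd x), succ_mod n (snd (snd x))) else (succ_mod n (fst (snd x)), snd (snd x)))"

definition dec :: "nat \<times> nat \<Rightarrow> nat \<Rightarrow> midedge \<Rightarrow> midedge" where
  "dec u k x = (if k = 1 then (False,u) else if k = 2 then (True,u) else x)"

definition Psi :: "nat \<Rightarrow> (nat \<times> nat \<Rightarrow> nat \<times> nat) \<Rightarrow> midedge \<Rightarrow> midedge" where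
  "Psi n c = (\<lambda>x. if x \<in> midedges n then dec (hv n x) ((if fst x then snd else fst) (c (hv n x))) x else x)"

lemma dec_cd: "y \<in> {x, (False,u), (True,u)} \<Longrightarrow> x \<notin> {(False,u),(True,u)} \<Longrightarrow> dec u (cd u y) x = y"
  by (auto simp: dec_def cd_def)

lemma cd_dec: "k \<le> 2 \<Longrightarrow> x \<notin> {(False,u),(True,u)} \<Longrightarrow> cd u (dec u k x) = k"
  by (auto simp: dec_def cd_def)

lemma allowed_iff: "(a,b) \<in> allowed l r d u \<longleftrightarrow> a \<le> 2 \<and> b \<le> 2 \<and> (a \<noteq> 0 \<longleftrightarrow> \<not> l) \<and> (b \<noteq> 0 \<longleftrightarrow> \<not> d)
      \<and> ((a = 1 \<or> b = 1) \<longleftrightarrow> \<not> r) \<and> ((a = 2 \<or> b = 2) \<longleftrightarrow> \<not> u) \<and> (a = b \<longrightarrow> a = 0)"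
proof (cases "a \<le> 2 \<and> b \<le> 2")
  case True
  then have "a \<in> {0,1,2}" "b \<in> {0,1,2}" by auto
  then show ?thesis unfolding allowed_def
    apply -
    apply (elim insertE emptyE)
    apply simp_all
    done
next
  case False
  then show ?thesis unfolding allowed_def by auto
qed

lemma Psi_Phi: assumes "\<rho> \<in> GS n" "n \<ge> 2" shows "Psi n (snd (Phi n \<rho>)) = \<rho>"
proof
  fix x
  have p: "\<rho> permutes midedges n" using assms(1) by (rule GS_perm)
  show "Psi n (snd (Phi n \<rho>)) x = \<rho> x"
  proof (cases "x \<in> midedges n")
    case False
    then show ?thesis using p by (simp add: Psi_def permutes_not_in)
  next
    case True
    then obtain c i j where x: "x = (c,i,j)" "i < n" "j < n" by (cases x) (auto simp: mid_iff)
    show ?thesis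
    proof (cases c)
      case True
      have g: "(i, succ_mod n j) \<in> grid n" using x assms(2) by (simp add: grid_def sm_lt)
      have "\<rho> x \<in> {x, (False, i, succ_mod n j), (True, i, succ_mod n j)}"
        using GS_D[OF assms x(2) sm_lt[OF assms(2), of j]] x True assms(2) by (simp add: pm_sm)
      moreover have "x \<notin> {(False, i, succ_mod n j), (True, i, succ_mod n j)}"
        using x sm_neq[OF assms(2) x(3)] by auto
      ultimately show ?thesis using x True g assms(2)
        by (simp add: Psi_def Phi_def hv_def Dm_def pm_sm dec_cd mid_iff del: insert_iff)
    next
      case False
      have g: "(succ_mod n i, j) \<in> grid n" using x assms(2) by (simp add: grid_def sm_lt)
      have "\<rho> x \<in> {x, (False, succ_mod n i, j), (True, succ_mod n i, j)}"
        using GS_L[OF assms sm_lt[OF assms(2), of i] x(3)] x False assms(2) by (simp add: pm_sm)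
      moreover have "x \<notin> {(False, succ_mod n i, j), (True, succ_mod n i, j)}"
        using x sm_neq[OF assms(2) x(2)] by auto
      ultimately show ?thesis using x False g assms(2)
        by (simp add: Psi_def Phi_def hv_def Lm_def pm_sm dec_cd mid_iff del: insert_iff)
    qed
  qed
qed


lemma TT_E: assumes "t \<in> TT n"
  obtains h w c where "t = ((h,w),c)" "h \<in> grid n \<rightarrow>\<^sub>E UNIV" "w \<in> grid n \<rightarrow>\<^sub>E UNIV"
    "c \<in> PiE (grid n) (allw n h w)"
  using assms unfolding TT_def Ors_def by auto

lemma c_loc: assumes "c \<in> PiE (grid n) (allw n h w)" "n \<ge> 2" "i < n" "j < n"
  shows "fst (c (i,j)) \<le> 2 \<and> snd (c (i,j)) \<le> 2 \<and>
     (fst (c (i,j)) \<noteq> 0 \<longleftrightarrow> \<not> h (pred_mod n i, j)) \<and> (snd (c (i,j)) \<noteq> 0 \<longleftrightarrow> \<not> w (i, pred_mod n j))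
      \<and> ((fst (c (i,j)) = 1 \<or> snd (c (i,j)) = 1) \<longleftrightarrow> \<not> h (i,j))
      \<and> ((fst (c (i,j)) = 2 \<or> snd (c (i,j)) = 2) \<longleftrightarrow> \<not> w (i,j)) \<and> (fst (c (i,j)) = snd (c (i,j)) \<longrightarrow> fst (c (i,j)) = 0)"
proof -
  have "c (i,j) \<in> allw n h w (i,j)" using assms by (auto simp: grid_def)
  then show ?thesis unfolding allw_def by (cases "c (i,j)") (simp add: allowed_iff)
qed

lemma Psi_in: assumes "t \<in> TT n" "n \<ge> 2" shows "Psi n (snd t) \<in> GS n"
proof -
  obtain h w c where t: "t = ((h,w),c)" "h \<in> grid n \<rightarrow>\<^sub>E UNIV" "w \<in> grid n \<rightarrow>\<^sub>E UNIV"
    "c \<in> PiE (grid n) (allw n h w)" using assms(1) by (rule TT_E)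
  note cl = c_loc[OF t(4) assms(2)]
  define f where "f = Psi n c"
  have out: "f x = x" if "x \<notin> midedges n" for x using that by (simp add: f_def Psi_def)
  have loc: "(\<not> fst x \<longrightarrow> f x \<in> {x, plus_e3 n x, plus_e1 n x}) \<and>
         (fst x \<longrightarrow> f x \<in> {x, plus_e3 n x, plus_e2 n x})" if "x \<in> midedges n" for x
    using that by (cases x) (auto simp: f_def Psi_def dec_def hv_def plus_e1_def plus_e2_def plus_e3_def)
  have into: "f ` midedges n \<subseteq> midedges n"
  proof
    fix y assume "y \<in> f ` midedges n"
    then obtain x where x: "x \<in> midedges n" "y = f x" by auto
    then obtain b i j where "x = (b,i,j)" "i < n" "j < n" by (cases x) (auto simp: mid_iff)
    then show "y \<in> midedges n" using x assms(2)
      by (auto simp: f_def Psi_def dec_def hv_def mid_iff sm_lt)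
  qed
  have onto: "midedges n \<subseteq> f ` midedges n"
  proof
    fix y assume y: "y \<in> midedges n"
    then obtain b i j where yy: "y = (b,i,j)" "i < n" "j < n" by (cases y) (auto simp: mid_iff)
    have pi: "pred_mod n i < n" "pred_mod n j < n" "succ_mod n i < n" "succ_mod n j < n"
      using assms(2) by (auto simp: pm_lt sm_lt)
    show "y \<in> f ` midedges n"
    proof (cases b)
      case False
      show ?thesis
      proof (cases "h (i,j)")
        case True
        have "fst (c (succ_mod n i, j)) = 0" using cl[OF pi(3) yy(3)] True assms(2) yy by (simp add: pm_sm)
        then have "f y = y" using y yy False by (simp add: f_def Psi_def hv_def dec_def)
        then show ?thesis using y by force
      next
        case hF: False
        then have "fst (c (i,j)) = 1 \<or> snd (c (i,j)) = 1" using cl[OF yy(2,3)] by simp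
        then show ?thesis
        proof
          assume a: "fst (c (i,j)) = 1"
          have "f (False, pred_mod n i, j) = y" using a yy pi False assms(2)
            by (simp add: f_def Psi_def hv_def dec_def mid_iff sm_pm)
          then show ?thesis using pi yy by (metis image_eqI mid_iff)
        next
          assume a: "snd (c (i,j)) = 1"
          have "f (True, i, pred_mod n j) = y" using a yy pi False assms(2)
            by (simp add: f_def Psi_def hv_def dec_def mid_iff sm_pm)
          then show ?thesis using pi yy by (metis image_eqI mid_iff)
        qed
      qed
    next
      case True
      show ?thesis
      proof (cases "w (i,j)")
        case wT: True
        have "snd (c (i, succ_mod n j)) = 0" using cl[OF yy(2) pi(4)] wT assms(2) yy by (simp add: pm_sm)
        then have "f y = y" using y yy True by (simp add: f_def Psi_def hv_def dec_def)
        then show ?thesis using y by force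
      next
        case wF: False
        then have "fst (c (i,j)) = 2 \<or> snd (c (i,j)) = 2" using cl[OF yy(2,3)] by simp
        then show ?thesis
        proof
          assume a: "fst (c (i,j)) = 2"
          have "f (False, pred_mod n i, j) = y" using a yy pi True assms(2)
            by (simp add: f_def Psi_def hv_def dec_def mid_iff sm_pm)
          then show ?thesis using pi yy by (metis image_eqI mid_iff)
        next
          assume a: "snd (c (i,j)) = 2"
          have "f (True, i, pred_mod n j) = y" using a yy pi True assms(2)
            by (simp add: f_def Psi_def hv_def dec_def mid_iff sm_pm)
          then show ?thesis using pi yy by (metis image_eqI mid_iff)
        qed
      qed
    qed
  qed
  have fin: "finite (midedges n)" by (simp add: midedges_def grid_def)
  have "inj_on f (midedges n)" using finite_surj_inj[OF fin onto] .
  then have "bij_betw f (midedges n) (midedges n)" using into onto by (auto simp: bij_betw_def)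
  then have "f permutes midedges n" using out by (rule bij_imp_permutes)
  then show ?thesis using loc t(1) unfolding GS_def f_def by auto
qed


lemma Phi_Psi: assumes "t \<in> TT n" "n \<ge> 2" shows "Phi n (Psi n (snd t)) = t"
proof -
  obtain h w c where t: "t = ((h,w),c)" "h \<in> grid n \<rightarrow>\<^sub>E UNIV" "w \<in> grid n \<rightarrow>\<^sub>E UNIV"
    "c \<in> PiE (grid n) (allw n h w)" using assms(1) by (rule TT_E)
  note cl = c_loc[OF t(4) assms(2)]
  have e1: "restrict (\<lambda>v. Psi n c (False,v) = (False,v)) (grid n) = h"
  proof
    fix v show "restrict (\<lambda>v. Psi n c (False,v) = (False,v)) (grid n) v = h v"
    proof (cases "v \<in> grid n")
      case False then show ?thesis using PiE_arb[OF t(2) False] by simp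
    next
      case True
      then obtain i j where v: "v = (i,j)" "i < n" "j < n" by (auto simp: grid_def)
      have pi: "succ_mod n i < n" "succ_mod n i \<noteq> i" using assms(2) v by (auto simp: sm_lt sm_neq)
      have k: "fst (c (succ_mod n i, j)) \<le> 2" "fst (c (succ_mod n i, j)) \<noteq> 0 \<longleftrightarrow> \<not> h (i, j)"
        using cl[OF pi(1) v(3), unfolded pm_sm[OF assms(2) v(2)]] by auto
      have ps: "Psi n c (False,i,j) = dec (succ_mod n i, j) (fst (c (succ_mod n i, j))) (False,i,j)"
        using v by (simp add: Psi_def hv_def mid_iff)
      have "(Psi n c (False,i,j) = (False,i,j)) = h (i,j)"
        unfolding ps dec_def using k pi(2) by auto
      then show ?thesis using v True by simp
    qed
  qed
  have e2: "restrict (\<lambda>v. Psi n c (True,v) = (True,v)) (grid n) = w"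
  proof
    fix v show "restrict (\<lambda>v. Psi n c (True,v) = (True,v)) (grid n) v = w v"
    proof (cases "v \<in> grid n")
      case False then show ?thesis using PiE_arb[OF t(3) False] by simp
    next
      case True
      then obtain i j where v: "v = (i,j)" "i < n" "j < n" by (auto simp: grid_def)
      have pi: "succ_mod n j < n" "succ_mod n j \<noteq> j" using assms(2) v by (auto simp: sm_lt sm_neq)
      have k: "snd (c (i, succ_mod n j)) \<le> 2" "snd (c (i, succ_mod n j)) \<noteq> 0 \<longleftrightarrow> \<not> w (i, j)"
        using cl[OF v(2) pi(1), unfolded pm_sm[OF assms(2) v(3)]] by auto
      have ps: "Psi n c (True,i,j) = dec (i, succ_mod n j) (snd (c (i, succ_mod n j))) (True,i,j)"
        using v by (simp add: Psi_def hv_def mid_iff)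
      have "(Psi n c (True,i,j) = (True,i,j)) = w (i,j)"
        unfolding ps dec_def using k pi(2) by auto
      then show ?thesis using v True by simp
    qed
  qed
  have e3: "restrict (\<lambda>u. (cd u (Psi n c (Lm n u)), cd u (Psi n c (Dm n u)))) (grid n) = c"
  proof
    fix u show "restrict (\<lambda>u. (cd u (Psi n c (Lm n u)), cd u (Psi n c (Dm n u)))) (grid n) u = c u"
    proof (cases "u \<in> grid n")
      case False then show ?thesis using PiE_arb[OF t(4) False] by simp
    next
      case True
      then obtain i j where v: "u = (i,j)" "i < n" "j < n" by (auto simp: grid_def)
      have pi: "pred_mod n i < n" "pred_mod n i \<noteq> i" "pred_mod n j < n" "pred_mod n j \<noteq> j"
        using assms(2) v by (auto simp: pm_lt pm_neq)
      have k: "fst (c (i, j)) \<le> 2" "snd (c (i, j)) \<le> 2" using cl[OF v(2,3)] by auto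
      have a: "Psi n c (Lm n u) = dec u (fst (c u)) (Lm n u)"
        using v pi assms(2) by (simp add: Psi_def hv_def Lm_def mid_iff sm_pm)
      have b: "Psi n c (Dm n u) = dec u (snd (c u)) (Dm n u)"
        using v pi assms(2) by (simp add: Psi_def hv_def Dm_def mid_iff sm_pm)
      have "cd u (Psi n c (Lm n u)) = fst (c u)" unfolding a using k v pi
        by (intro cd_dec) (auto simp: Lm_def)
      moreover have "cd u (Psi n c (Dm n u)) = snd (c u)" unfolding b using k v pi
        by (intro cd_dec) (auto simp: Dm_def)
      ultimately show ?thesis using True by simp
    qed
  qed
  have "Phi n (Psi n c) = ((h,w),c)" by (simp only: Phi_def e1 e2 e3)
  then show ?thesis using t(1) by simp
qed


lemma prod_if_pow: "finite A \<Longrightarrow> (\<Prod>u\<in>A. if P u then (x::real) else 1) = x ^ card {u\<in>A. P u}"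
  by (simp add: prod.inter_filter[symmetric])

lemma Lm_inj: "n \<ge> 2 \<Longrightarrow> inj_on (Lm n) (grid n)"
  by (auto simp: inj_on_def Lm_def grid_def dest: pm_inj)
lemma Dm_inj: "n \<ge> 2 \<Longrightarrow> inj_on (Dm n) (grid n)"
  by (auto simp: inj_on_def Dm_def grid_def dest: pm_inj)

lemma GS_gen: assumes "\<rho> \<in> GS n" "n \<ge> 2" "i < n" "j < n"
  shows "\<rho> (b,i,j) \<in> (if b then {(b,i,j), (False,i,succ_mod n j), (True,i,succ_mod n j)}
                else {(b,i,j), (True,succ_mod n i,j), (False,succ_mod n i,j)})"
proof -
  have "(b,i,j) \<in> midedges n" using assms by (simp add: mid_iff)
  then show ?thesis using assms(1) unfolding GS_def
    by (cases b) (auto simp: plus_e1_def plus_e2_def plus_e3_def)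
qed

lemma setA: assumes "\<rho> \<in> GS n" "n \<ge> 2"
  shows "{x \<in> midedges n. \<rho> x = plus_e1 n x} = Lm n ` {u \<in> grid n. \<rho> (Lm n u) = (False,u)}"
proof (intro equalityI subsetI)
  fix x assume x: "x \<in> {x \<in> midedges n. \<rho> x = plus_e1 n x}"
  then obtain b i j where xx: "x = (b,i,j)" "i < n" "j < n" by (cases x) (auto simp: mid_iff)
  note g = GS_gen[OF assms xx(2,3), of b]
  have ne: "succ_mod n i \<noteq> i" using sm_neq[OF assms(2) xx(2)] .
  show "x \<in> Lm n ` {u \<in> grid n. \<rho> (Lm n u) = (False,u)}"
  proof (cases b)
    case True then show ?thesis using x g xx ne by (auto simp: plus_e1_def split: if_splits)
  next
    case False
    have e: "x = Lm n (succ_mod n i, j)" "(succ_mod n i, j) \<in> grid n"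
      using xx assms(2) False by (auto simp: Lm_def pm_sm grid_def sm_lt)
    have "\<rho> x = (False, succ_mod n i, j)" using x xx False by (simp add: plus_e1_def)
    then show ?thesis using e by (intro image_eqI[of x _ "(succ_mod n i, j)"]) auto
  qed
next
  fix x assume "x \<in> Lm n ` {u \<in> grid n. \<rho> (Lm n u) = (False,u)}"
  then obtain i j where "x = Lm n (i,j)" "i < n" "j < n" "\<rho> (Lm n (i,j)) = (False,i,j)"
    by (auto simp: grid_def)
  then show "x \<in> {x \<in> midedges n. \<rho> x = plus_e1 n x}" using assms(2)
    by (simp add: Lm_def plus_e1_def mid_iff pm_lt sm_pm)
qed

lemma setB: assumes "\<rho> \<in> GS n" "n \<ge> 2"
  shows "{x \<in> midedges n. \<rho> x = plus_e2 n x} = Dm n ` {u \<in> grid n. \<rho> (Dm n u) = (True,u)}"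
proof (intro equalityI subsetI)
  fix x assume x: "x \<in> {x \<in> midedges n. \<rho> x = plus_e2 n x}"
  then obtain b i j where xx: "x = (b,i,j)" "i < n" "j < n" by (cases x) (auto simp: mid_iff)
  note g = GS_gen[OF assms xx(2,3), of b]
  have ne: "succ_mod n j \<noteq> j" using sm_neq[OF assms(2) xx(3)] .
  show "x \<in> Dm n ` {u \<in> grid n. \<rho> (Dm n u) = (True,u)}"
  proof (cases b)
    case False then show ?thesis using x g xx ne by (auto simp: plus_e2_def split: if_splits)
  next
    case True
    have e: "x = Dm n (i, succ_mod n j)" "(i, succ_mod n j) \<in> grid n"
      using xx assms(2) True by (auto simp: Dm_def pm_sm grid_def sm_lt)
    have "\<rho> x = (True, i, succ_mod n j)" using x xx True by (simp add: plus_e2_def)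
    then show ?thesis using e by (intro image_eqI[of x _ "(i, succ_mod n j)"]) auto
  qed
next
  fix x assume "x \<in> Dm n ` {u \<in> grid n. \<rho> (Dm n u) = (True,u)}"
  then obtain i j where "x = Dm n (i,j)" "i < n" "j < n" "\<rho> (Dm n (i,j)) = (True,i,j)"
    by (auto simp: grid_def)
  then show "x \<in> {x \<in> midedges n. \<rho> x = plus_e2 n x}" using assms(2)
    by (simp add: Dm_def plus_e2_def mid_iff pm_lt sm_pm)
qed

lemma setC: assumes "\<rho> \<in> GS n" "n \<ge> 2"
  shows "{x \<in> midedges n. \<rho> x = plus_e3 n x} = Lm n ` {u \<in> grid n. \<rho> (Lm n u) = (True,u)}
          \<union> Dm n ` {u \<in> grid n. \<rho> (Dm n u) = (False,u)}"
proof (intro equalityI subsetI)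
  fix x assume x: "x \<in> {x \<in> midedges n. \<rho> x = plus_e3 n x}"
  then obtain b i j where xx: "x = (b,i,j)" "i < n" "j < n" by (cases x) (auto simp: mid_iff)
  show "x \<in> Lm n ` {u \<in> grid n. \<rho> (Lm n u) = (True,u)} \<union> Dm n ` {u \<in> grid n. \<rho> (Dm n u) = (False,u)}"
  proof (cases b)
    case False
    have e: "x = Lm n (succ_mod n i, j)" "(succ_mod n i, j) \<in> grid n"
      using xx assms(2) False by (auto simp: Lm_def pm_sm grid_def sm_lt)
    have "\<rho> x = (True, succ_mod n i, j)" using x xx False by (simp add: plus_e3_def)
    then have "x \<in> Lm n ` {u \<in> grid n. \<rho> (Lm n u) = (True,u)}"
      using e by (intro image_eqI[of x _ "(succ_mod n i, j)"]) auto
    then show ?thesis by blast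
  next
    case True
    have e: "x = Dm n (i, succ_mod n j)" "(i, succ_mod n j) \<in> grid n"
      using xx assms(2) True by (auto simp: Dm_def pm_sm grid_def sm_lt)
    have "\<rho> x = (False, i, succ_mod n j)" using x xx True by (simp add: plus_e3_def)
    then have "x \<in> Dm n ` {u \<in> grid n. \<rho> (Dm n u) = (False,u)}"
      using e by (intro image_eqI[of x _ "(i, succ_mod n j)"]) auto
    then show ?thesis by blast
  qed
next
  fix x assume "x \<in> Lm n ` {u \<in> grid n. \<rho> (Lm n u) = (True,u)} \<union> Dm n ` {u \<in> grid n. \<rho> (Dm n u) = (False,u)}"
  then show "x \<in> {x \<in> midedges n. \<rho> x = plus_e3 n x}" using assms(2)
    by (auto simp: Lm_def Dm_def plus_e3_def mid_iff pm_lt sm_pm grid_def)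
qed

lemma term_eq: assumes "\<rho> \<in> GS n" "n \<ge> 2"
  shows "(-1) ^ S_count n \<rho> * \<alpha> ^ A_count n \<rho> * \<beta> ^ B_count n \<rho> * \<gamma> ^ C_count n \<rho>
     = (\<Prod>u\<in>grid n. lw \<alpha> \<beta> \<gamma> (snd (Phi n \<rho>) u))"
proof -
  define P1 where "P1 u = (\<rho> (Lm n u) = (False,u))" for u
  define P2 where "P2 u = (\<rho> (Lm n u) = (True,u))" for u
  define P3 where "P3 u = (\<rho> (Dm n u) = (False,u))" for u
  define P4 where "P4 u = (\<rho> (Dm n u) = (True,u))" for u
  have fg: "finite (grid n)" by (simp add: grid_def)
  have "(\<Prod>u\<in>grid n. lw \<alpha> \<beta> \<gamma> (snd (Phi n \<rho>) u)) =
    (\<Prod>u\<in>grid n. (if P1 u \<and> P4 u then -1 else 1) * (if P1 u then \<alpha> else 1) * (if P4 u then \<beta> else 1)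
        * (if P2 u then \<gamma> else 1) * (if P3 u then \<gamma> else 1))"
    by (rule prod.cong) (auto simp: Phi_def lw_def cd_def P1_def P2_def P3_def P4_def)
  also have "\<dots> = (-1) ^ card {u\<in>grid n. P1 u \<and> P4 u} * \<alpha> ^ card {u\<in>grid n. P1 u}
      * \<beta> ^ card {u\<in>grid n. P4 u} * (\<gamma> ^ card {u\<in>grid n. P2 u} * \<gamma> ^ card {u\<in>grid n. P3 u})"
    by (simp add: prod.distrib prod_if_pow[OF fg] mult.assoc)
  also have "card {u\<in>grid n. P1 u \<and> P4 u} = S_count n \<rho>"
  proof -
    have "{u\<in>grid n. P1 u \<and> P4 u} = {v \<in> grid n. case v of (i, j) \<Rightarrow>
       \<rho> (False, pred_mod n i, j) = (False, i, j) \<and> \<rho> (True, i, pred_mod n j) = (True, i, j)}"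
      by (auto simp: P1_def P4_def Lm_def Dm_def)
    then show ?thesis by (simp add: S_count_def)
  qed
  also have "card {u\<in>grid n. P1 u} = A_count n \<rho>"
    unfolding A_count_def setA[OF assms] P1_def
    by (rule card_image[symmetric], rule inj_on_subset[OF Lm_inj[OF assms(2)]]) auto
  also have "card {u\<in>grid n. P4 u} = B_count n \<rho>"
    unfolding B_count_def setB[OF assms] P4_def
    by (rule card_image[symmetric], rule inj_on_subset[OF Dm_inj[OF assms(2)]]) auto
  also have "\<gamma> ^ card {u\<in>grid n. P2 u} * \<gamma> ^ card {u\<in>grid n. P3 u} = \<gamma> ^ C_count n \<rho>"
  proof -
    have c1: "card (Lm n ` {u \<in> grid n. P2 u}) = card {u \<in> grid n. P2 u}"
      by (rule card_image, rule inj_on_subset[OF Lm_inj[OF assms(2)]]) auto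
    have c2: "card (Dm n ` {u \<in> grid n. P3 u}) = card {u \<in> grid n. P3 u}"
      by (rule card_image, rule inj_on_subset[OF Dm_inj[OF assms(2)]]) auto
    have "C_count n \<rho> = card (Lm n ` {u \<in> grid n. P2 u} \<union> Dm n ` {u \<in> grid n. P3 u})"
      unfolding C_count_def setC[OF assms] P2_def P3_def ..
    also have "\<dots> = card {u \<in> grid n. P2 u} + card {u \<in> grid n. P3 u}"
    proof -
      have dj: "Lm n ` {u \<in> grid n. P2 u} \<inter> Dm n ` {u \<in> grid n. P3 u} = {}"
        by (auto simp: Lm_def Dm_def)
      show ?thesis using card_Un_disjoint[OF _ _ dj] fg c1 c2 by simp
    qed
    finally show ?thesis by (simp add: power_add)
  qed
  finally show ?thesis by (simp add: mult.assoc)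
qed

lemma vw_zero: "in_degree n h w (i,j) \<noteq> 2 \<Longrightarrow>
   vertex_weight a1 a2 b1 b2 c1 c2 (h (pred_mod n i, j)) (h (i, j)) (w (i, pred_mod n j)) (w (i, j)) = 0"
  unfolding in_degree_def vertex_weight_def by (auto split: if_splits)

lemma vw_nonneg: "a1 \<ge> 0 \<Longrightarrow> a2 \<ge> 0 \<Longrightarrow> b1 \<ge> 0 \<Longrightarrow> b2 \<ge> 0 \<Longrightarrow> c1 \<ge> 0 \<Longrightarrow> c2 \<ge> 0 \<Longrightarrow>
   vertex_weight a1 a2 b1 b2 c1 c2 l r d u \<ge> 0"
  unfolding vertex_weight_def by auto

theorem corollary2p4:
  fixes \<alpha> \<beta> \<gamma> :: real and n :: nat
  assumes "\<alpha> > 0" and "\<beta> > 0" and "\<gamma> > 0" and "\<gamma>^2 - \<alpha> * \<beta> > 0" and "n \<ge> 2"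
  shows "Z_GS n \<alpha> \<beta> \<gamma> = Z6 n 1 (\<gamma>^2 - \<alpha> * \<beta>) \<beta> \<alpha> \<gamma> \<gamma> \<and> Z_GS n \<alpha> \<beta> \<gamma> > 0"
proof -
  define VW where "VW l r d u = vertex_weight 1 (\<gamma>^2 - \<alpha> * \<beta>) \<beta> \<alpha> \<gamma> \<gamma> l r d u" for l r d u
  define F where "F p = (\<Prod>u\<in>grid n. VW (fst p (pred_mod n (fst u), snd u)) (fst p u)
      (snd p (fst u, pred_mod n (snd u))) (snd p u))" for p :: "(nat \<times> nat \<Rightarrow> bool) \<times> (nat \<times> nat \<Rightarrow> bool)"
  have fg: "finite (grid n)" by (simp add: grid_def)
  have fO: "finite (Ors n)" using fg by (simp add: Ors_def finite_PiE)
  have "Z_GS n \<alpha> \<beta> \<gamma> = (\<Sum>\<rho>\<in>GS n. (\<Prod>u\<in>grid n. lw \<alpha> \<beta> \<gamma> (snd (Phi n \<rho>) u)))"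
    unfolding Z_GS_def using term_eq[OF _ assms(5)] by (intro sum.cong) auto
  also have "\<dots> = (\<Sum>t\<in>TT n. (\<Prod>u\<in>grid n. lw \<alpha> \<beta> \<gamma> (snd t u)))"
  proof (rule sum.reindex_bij_witness[of _ "\<lambda>t. Psi n (snd t)" "Phi n"])
    show "\<And>a. a \<in> GS n \<Longrightarrow> Psi n (snd (Phi n a)) = a" using Psi_Phi assms(5) by blast
    show "\<And>a. a \<in> GS n \<Longrightarrow> Phi n a \<in> TT n" using Phi_in assms(5) by blast
    show "\<And>b. b \<in> TT n \<Longrightarrow> Phi n (Psi n (snd b)) = b" using Phi_Psi assms(5) by blast
    show "\<And>b. b \<in> TT n \<Longrightarrow> Psi n (snd b) \<in> GS n" using Psi_in assms(5) by blast
  qed simp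
  also have "\<dots> = (\<Sum>p\<in>Ors n. \<Sum>c\<in>PiE (grid n) (allw n (fst p) (snd p)). \<Prod>u\<in>grid n. lw \<alpha> \<beta> \<gamma> (c u))"
    unfolding TT_def using fO fg
    by (subst sum.Sigma) (auto simp: finite_PiE allw_def allowed_fin split_beta)
  also have "\<dots> = (\<Sum>p\<in>Ors n. F p)"
  proof (rule sum.cong[OF refl])
    fix p
    have "(\<Sum>c\<in>PiE (grid n) (allw n (fst p) (snd p)). \<Prod>u\<in>grid n. lw \<alpha> \<beta> \<gamma> (c u))
       = (\<Prod>u\<in>grid n. \<Sum>s\<in>allw n (fst p) (snd p) u. lw \<alpha> \<beta> \<gamma> s)"
      using fg by (subst prod_sum_PiE) (auto simp: allw_def allowed_fin)
    also have "\<dots> = F p" unfolding F_def VW_def allw_def local_sum ..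
    finally show "(\<Sum>c\<in>PiE (grid n) (allw n (fst p) (snd p)). \<Prod>u\<in>grid n. lw \<alpha> \<beta> \<gamma> (c u)) = F p" .
  qed
  finally have Z1: "Z_GS n \<alpha> \<beta> \<gamma> = sum F (Ors n)" .
  have sub: "six_vertex_configs n \<subseteq> Ors n" by (auto simp: six_vertex_configs_def Ors_def)
  have "sum F (Ors n) = sum F (six_vertex_configs n)"
  proof (rule sum.mono_neutral_right[OF fO sub], rule ballI)
    fix p assume p: "p \<in> Ors n - six_vertex_configs n"
    then obtain h w where hw: "p = (h,w)" by (cases p)
    then obtain v where v: "v \<in> grid n" "in_degree n h w v \<noteq> 2"
      using p by (auto simp: six_vertex_configs_def Ors_def)
    obtain i j where "v = (i,j)" by (cases v)
    then have "VW (h (pred_mod n (fst v), snd v)) (h v) (w (fst v, pred_mod n (snd v))) (w v) = 0"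
      using vw_zero[OF v(2)[unfolded \<open>v = (i,j)\<close>]] by (simp add: VW_def)
    then show "F p = 0" unfolding F_def hw using v(1) fg by (auto intro: prod_zero)
  qed
  also have "\<dots> = Z6 n 1 (\<gamma>^2 - \<alpha> * \<beta>) \<beta> \<alpha> \<gamma> \<gamma>"
    unfolding Z6_def F_def VW_def
    by (intro sum.cong refl prod.cong) (auto simp: split_beta)
  finally have eq: "Z_GS n \<alpha> \<beta> \<gamma> = Z6 n 1 (\<gamma>^2 - \<alpha> * \<beta>) \<beta> \<alpha> \<gamma> \<gamma>" using Z1 by simp
  have nn: "VW l r d u \<ge> 0" for l r d u
    unfolding VW_def using assms by (intro vw_nonneg) auto
  define p0 where "p0 = (restrict (\<lambda>_. True) (grid n), restrict (\<lambda>_. True) (grid n))"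
  have p0: "p0 \<in> Ors n" by (simp add: p0_def Ors_def)
  have "F p0 = 1" unfolding F_def
  proof (rule prod.neutral, rule ballI)
    fix u assume u: "u \<in> grid n"
    then have "(pred_mod n (fst u), snd u) \<in> grid n" "(fst u, pred_mod n (snd u)) \<in> grid n"
      using assms(5) by (auto simp: grid_def pm_lt)
    then show "VW (fst p0 (pred_mod n (fst u), snd u)) (fst p0 u) (snd p0 (fst u, pred_mod n (snd u))) (snd p0 u) = 1"
      using u by (simp add: p0_def VW_def vertex_weight_def)
  qed
  then have "sum F (Ors n) > 0"
    by (intro sum_pos2[OF fO p0]) (auto simp: F_def nn intro: prod_nonneg)
  then show ?thesis using eq Z1 by simp
qed

end
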